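(* Let $R$ be a commutative Artinian ring and $M$ a non-zero $R$-module with two minimal PS-hollow representations $\sum_{i=1}^n N_i=M=\sum_{i=1}^n K_i$, where both $N_i$ and $K_i$ are $H_i$-PS-hollow for each $i\in\{1,\dots,n\}$. If $In(N)$ is PS-hollow whenever $N$ is a main PS-hollow submodule of $M$, then $N_i=K_i$ for all $i\in\{1,\dots,n\}$.
   Context: All rings are commutative with unity. An $R$-submodule $N\leq M$ is PS-hollow iff for every ideal $I\leq R$ and every submodule $L\leq M$: $N\subseteq IM+L$ implies $N\subseteq IM$ or $N\subseteq L$. For a PS-hollow $N\leq M$ put $A_N=\{I\leq R: N\subseteq IM\}$, $H_N$ the set of minimal elements of $A_N$, and $In(N)=\bigcap_{I\in H_N} IM$ ($=M$ if $H_N=\emptyset$). For a set $H$ of ideals, $N$ is $H$-PS-hollow iff $N$ is PS-hollow and $H_N=H$. A minimal PS-hollow representation of $M$ is an expression $M=\sum_{i=1}^n N_i$ with each $N_i$ $H_i$-PS-hollow, such that $In(N_1),\dots,In(N_n)$ are pairwise incomparable and $N_j\not\subseteq\sum_{i\neq j}N_i$ for every $j$. A main PS-hollow submodule of $M$ is a submodule occurring as a summand $N_i$ in some minimal PS-hollow representation of $M$. *)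

theory Defs
  imports "HOL.Modules"
begin

text \<open>The ring R is the whole type 'a (a comm_ring_1); the R-module M is the whole
type 'b (an ab_group_add) with scalar multiplication scale, assumed to satisfy
the module axioms (locale module of HOL.Modules). Submodules of M are the
subspaces of module scale.\<close>

definition ring_ideal :: "'a::comm_ring_1 set \<Rightarrow> bool" where
  "ring_ideal I \<longleftrightarrow> 0 \<in> I \<and> (\<forall>x\<in>I. \<forall>y\<in>I. x + y \<in> I) \<and> (\<forall>r. \<forall>x\<in>I. r * x \<in> I)"

definition artinian_ring :: "'a::comm_ring_1 itself \<Rightarrow> bool" where
  "artinian_ring TYPE('a) \<longleftrightarrow>
     (\<forall>f :: nat \<Rightarrow> 'a set. (\<forall>k. ring_ideal (f k)) \<and> (\<forall>k. f (Suc k) \<subseteq> f k)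
        \<longrightarrow> (\<exists>m. \<forall>k\<ge>m. f k = f m))"

definition ideal_times_module ::
  "('a::comm_ring_1 \<Rightarrow> 'b::ab_group_add \<Rightarrow> 'b) \<Rightarrow> 'a set \<Rightarrow> 'b set" where
  "ideal_times_module scale I = module.span scale {scale a m | a m. a \<in> I}"

definition sm_sum :: "('a::comm_ring_1 \<Rightarrow> 'b::ab_group_add \<Rightarrow> 'b) \<Rightarrow> 'b set \<Rightarrow> 'b set \<Rightarrow> 'b set" where
  "sm_sum scale N L = module.span scale (N \<union> L)"

definition PS_hollow :: "('a::comm_ring_1 \<Rightarrow> 'b::ab_group_add \<Rightarrow> 'b) \<Rightarrow> 'b set \<Rightarrow> bool" where
  "PS_hollow scale N \<longleftrightarrow> module.subspace scale N \<and>
     (\<forall>I L. ring_ideal I \<and> module.subspace scale L \<and>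
        N \<subseteq> sm_sum scale (ideal_times_module scale I) L
        \<longrightarrow> N \<subseteq> ideal_times_module scale I \<or> N \<subseteq> L)"

definition A_set :: "('a::comm_ring_1 \<Rightarrow> 'b::ab_group_add \<Rightarrow> 'b) \<Rightarrow> 'b set \<Rightarrow> 'a set set" where
  "A_set scale N = {I. ring_ideal I \<and> N \<subseteq> ideal_times_module scale I}"

definition H_set :: "('a::comm_ring_1 \<Rightarrow> 'b::ab_group_add \<Rightarrow> 'b) \<Rightarrow> 'b set \<Rightarrow> 'a set set" where
  "H_set scale N = {I \<in> A_set scale N. \<forall>J \<in> A_set scale N. J \<subseteq> I \<longrightarrow> J = I}"

text \<open>In(N): intersection of the I M over the minimal I; equals M = UNIV if there are none.\<close>
definition In_sm :: "('a::comm_ring_1 \<Rightarrow> 'b::ab_group_add \<Rightarrow> 'b) \<Rightarrow> 'b set \<Rightarrow> 'b set" where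
  "In_sm scale N = (\<Inter>I \<in> H_set scale N. ideal_times_module scale I)"

definition H_PS_hollow ::
  "('a::comm_ring_1 \<Rightarrow> 'b::ab_group_add \<Rightarrow> 'b) \<Rightarrow> 'a set set \<Rightarrow> 'b set \<Rightarrow> bool" where
  "H_PS_hollow scale H N \<longleftrightarrow> PS_hollow scale N \<and> H_set scale N = H"

text \<open>Minimal PS-hollow representation M = N_0 + ... + N_(n-1) (indices i < n).
Each N_i is H_i-PS-hollow for H_i = H_set N_i, i.e. simply PS-hollow.\<close>
definition min_PS_rep ::
  "('a::comm_ring_1 \<Rightarrow> 'b::ab_group_add \<Rightarrow> 'b) \<Rightarrow> nat \<Rightarrow> (nat \<Rightarrow> 'b set) \<Rightarrow> bool" where
  "min_PS_rep scale n N \<longleftrightarrow>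
     module.span scale (\<Union>i<n. N i) = UNIV \<and>
     (\<forall>i<n. PS_hollow scale (N i)) \<and>
     (\<forall>i<n. \<forall>j<n. i \<noteq> j \<longrightarrow> \<not> In_sm scale (N i) \<subseteq> In_sm scale (N j)) \<and>
     (\<forall>j<n. \<not> N j \<subseteq> module.span scale (\<Union>i\<in>{..<n} - {j}. N i))"

definition main_PS_hollow :: "('a::comm_ring_1 \<Rightarrow> 'b::ab_group_add \<Rightarrow> 'b) \<Rightarrow> 'b set \<Rightarrow> bool" where
  "main_PS_hollow scale N \<longleftrightarrow> (\<exists>m Ns. min_PS_rep scale m Ns \<and> (\<exists>i<m. Ns i = N))"

end

theory Submission
  imports Defs
begin

lemma key_peel:
  fixes scale :: "'a::comm_ring_1 \<Rightarrow> 'b::ab_group_add \<Rightarrow> 'b"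
  assumes mod: "module scale" and fin: "finite S"
    and ps: "PS_hollow scale T"
    and idl: "\<forall>j\<in>S. ring_ideal (I j) \<and> \<not> T \<subseteq> ideal_times_module scale (I j)"
  shows "module.subspace scale N \<Longrightarrow>
     T \<subseteq> module.span scale (N \<union> (\<Union>j\<in>S. ideal_times_module scale (I j))) \<Longrightarrow> T \<subseteq> N"
  using fin idl
proof (induction S arbitrary: N)
  case empty
  interpret module scale by (rule mod)
  have "span N \<subseteq> N" using span_minimal[OF order_refl] empty.prems(1) by blast
  with empty.prems(2) show ?case by simp
next
  case (insert j S)
  interpret module scale by (rule mod)
  define L where "L = span (N \<union> (\<Union>k\<in>S. ideal_times_module scale (I k)))"
  have sL: "N \<union> (\<Union>k\<in>S. ideal_times_module scale (I k)) \<subseteq> L"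
    unfolding L_def by (rule span_superset)
  have "N \<union> (\<Union>k\<in>insert j S. ideal_times_module scale (I k))
        \<subseteq> ideal_times_module scale (I j) \<union> L"
    using sL by auto
  hence "span (N \<union> (\<Union>k\<in>insert j S. ideal_times_module scale (I k)))
        \<subseteq> span (ideal_times_module scale (I j) \<union> L)"
    by (rule span_mono)
  with insert.prems(2) have "T \<subseteq> span (ideal_times_module scale (I j) \<union> L)"
    by (rule order_trans)
  hence T1: "T \<subseteq> sm_sum scale (ideal_times_module scale (I j)) L"
    unfolding sm_sum_def .
  have subL: "subspace L" unfolding L_def by (rule subspace_span)
  have Ij: "ring_ideal (I j)" "\<not> T \<subseteq> ideal_times_module scale (I j)"
    using insert.prems(3) by auto
  have "T \<subseteq> ideal_times_module scale (I j) \<or> T \<subseteq> L"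
    using ps Ij(1) subL T1 unfolding PS_hollow_def by auto
  hence "T \<subseteq> L" using Ij(2) by auto
  moreover have "\<forall>j\<in>S. ring_ideal (I j) \<and> \<not> T \<subseteq> ideal_times_module scale (I j)"
    using insert.prems(3) by auto
  ultimately show ?case using insert.IH[of N] insert.prems(1) unfolding L_def by auto
qed

lemma sub_In:
  fixes scale :: "'a::comm_ring_1 \<Rightarrow> 'b::ab_group_add \<Rightarrow> 'b"
  shows "N \<subseteq> In_sm scale N"
  unfolding In_sm_def H_set_def A_set_def by blast

lemma main_eq_In:
  fixes scale :: "'a::comm_ring_1 \<Rightarrow> 'b::ab_group_add \<Rightarrow> 'b"
  assumes mod: "module scale" and rep: "min_PS_rep scale n N" and i: "i < n"
    and psT: "PS_hollow scale (In_sm scale (N i))"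
  shows "N i = In_sm scale (N i)"
proof -
  interpret module scale by (rule mod)
  define T where "T = In_sm scale (N i)"
  have ex: "\<exists>I. I \<in> H_set scale (N j) \<and> \<not> T \<subseteq> ideal_times_module scale I"
    if "j < n" "j \<noteq> i" for j
  proof -
    from rep that i have "\<not> T \<subseteq> In_sm scale (N j)"
      unfolding min_PS_rep_def T_def by blast
    then show ?thesis unfolding In_sm_def by blast
  qed
  define Ij where "Ij j = (SOME I. I \<in> H_set scale (N j) \<and> \<not> T \<subseteq> ideal_times_module scale I)" for j
  have Ij: "Ij j \<in> H_set scale (N j) \<and> \<not> T \<subseteq> ideal_times_module scale (Ij j)"
    if "j < n" "j \<noteq> i" for j
    unfolding Ij_def using someI_ex[OF ex[OF that]] .
  define S where "S = {..<n} - {i}"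
  have idl: "\<forall>j\<in>S. ring_ideal (Ij j) \<and> \<not> T \<subseteq> ideal_times_module scale (Ij j)"
    using Ij unfolding S_def H_set_def A_set_def by blast
  have subN: "subspace (N i)" using rep i unfolding min_PS_rep_def PS_hollow_def by blast
  have "(\<Union>j<n. N j) \<subseteq> N i \<union> (\<Union>j\<in>S. ideal_times_module scale (Ij j))"
  proof
    fix x assume "x \<in> (\<Union>j<n. N j)"
    then obtain j where j: "j < n" "x \<in> N j" by blast
    show "x \<in> N i \<union> (\<Union>j\<in>S. ideal_times_module scale (Ij j))"
    proof (cases "j = i")
      case True then show ?thesis using j by blast
    next
      case False
      then have "N j \<subseteq> ideal_times_module scale (Ij j)"
        using Ij[OF j(1) False] unfolding H_set_def A_set_def by blast
      then show ?thesis using j False unfolding S_def by blast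
    qed
  qed
  hence "span (\<Union>j<n. N j) \<subseteq> span (N i \<union> (\<Union>j\<in>S. ideal_times_module scale (Ij j)))"
    by (rule span_mono)
  moreover have "span (\<Union>j<n. N j) = UNIV" using rep unfolding min_PS_rep_def by (rule conjunct1)
  ultimately have "T \<subseteq> span (N i \<union> (\<Union>j\<in>S. ideal_times_module scale (Ij j)))"
    by auto
  moreover have finS: "finite S" unfolding S_def by simp
  moreover have psT': "PS_hollow scale T" using psT unfolding T_def .
  ultimately have "T \<subseteq> N i"
    using key_peel[OF mod finS psT' idl subN] by blast
  then have "In_sm scale (N i) \<subseteq> N i" unfolding T_def .
  with sub_In[of "N i" scale] show ?thesis by (rule subset_antisym)
qed

theorem corollary5p11:
  fixes scale :: "'a::comm_ring_1 \<Rightarrow> 'b::ab_group_add \<Rightarrow> 'b"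
    and n :: nat and N K :: "nat \<Rightarrow> 'b set" and H :: "nat \<Rightarrow> 'a set set"
  assumes "module scale"
    and "artinian_ring TYPE('a)"
    and "\<exists>x::'b. x \<noteq> 0"
    and "min_PS_rep scale n N" and "min_PS_rep scale n K"
    and "\<forall>i<n. H_PS_hollow scale (H i) (N i) \<and> H_PS_hollow scale (H i) (K i)"
    and "\<forall>L. main_PS_hollow scale L \<longrightarrow> PS_hollow scale (In_sm scale L)"
  shows "\<forall>i<n. N i = K i"
proof (intro allI impI)
  fix i assume i: "i < n"
  have mN: "main_PS_hollow scale (N i)" unfolding main_PS_hollow_def
    using assms(4) i by (intro exI[of _ n] exI[of _ N]) auto
  have mK: "main_PS_hollow scale (K i)" unfolding main_PS_hollow_def
    using assms(5) i by (intro exI[of _ n] exI[of _ K]) auto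
  have eN: "N i = In_sm scale (N i)"
    by (rule main_eq_In[OF assms(1) assms(4) i]) (rule assms(7)[rule_format, OF mN])
  have eK: "K i = In_sm scale (K i)"
    by (rule main_eq_In[OF assms(1) assms(5) i]) (rule assms(7)[rule_format, OF mK])
  have "H_set scale (N i) = H_set scale (K i)"
    using assms(6) i unfolding H_PS_hollow_def by auto
  then have "In_sm scale (N i) = In_sm scale (K i)" unfolding In_sm_def by simp
  then show "N i = K i" using eN eK by simp
qed

end
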